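(* Let $\mathcal{G}=(V,\mathit{Act},\mathcal{R})$ be a normed BPA system and $\gamma,\delta\in V^*$ with $R_\gamma=R_\delta$. Then for every $A\in V$ we have $R_{A\gamma}=R_{A\delta}$, and for all $\alpha,\beta\in V^*$ we have $\alpha\gamma\sim\beta\gamma$ iff $\alpha\delta\sim\beta\delta$. Moreover, for each $A\in V$ and $\gamma\in V^*$, the set of strings $\alpha\in V^*$ such that (a) $\alpha\gamma\sim A\gamma$ and (b) $\alpha$ is a redundancy-free prefix of $\alpha\gamma$ is finite and nonempty, and it depends only on $R_\gamma$ (not on $\gamma$ itself). Consequently the canonical transducer $\mathcal{T}^\mathcal{G}$ is well defined.
   Context: A BPA system $\mathcal{G}=(V,\mathit{Act},\mathcal{R})$: finite variables $V$, finite actions (possibly containing silent $\tau$), rules $A\xrightarrow{a}\alpha$; LTS $\mathcal{L}_\mathcal{G}$ on $V^*$ with $A\beta\xrightarrow{a}\alpha\beta$ for rules $A\xrightarrow{a}\alpha$. Normed: each variable can reach $\varepsilon$. $\sim$ is branching bisimilarity in $\mathcal{L}_\mathcal{G}$ (largest relation $\mathcal{B}$ such that for $(s,t)\in\mathcal{B}$ each move $s\xrightarrow{a}s'$ is matched by $a=\tau$ with $(s',t)\in\mathcal{B}$, or by $t=t_0\xrightarrow{\tau}\cdots\xrightarrow{\tau}t_k\xrightarrow{a}t'$ with $(s',t')\in\mathcal{B}$, $(s,t_i)\in\mathcal{B}$ for $i\in[1,k]$; and symmetrically). $R_\gamma=\{X\in V\mid X\gamma\sim\gamma\}$. The prefix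 $\alpha$ of $\alpha\gamma$ is redundancy-free if it cannot be written as $\alpha=\delta X\beta$ with $X\beta\gamma\sim\beta\gamma$. Fix a linear order on $V$; $\alpha$ is lexicographically smaller than $\beta$ if $\alpha$ is a proper suffix of $\beta$, or $\alpha=\alpha'A\gamma$, $\beta=\beta'B\gamma$ with $A<B$. The canonical transducer $\mathcal{T}^\mathcal{G}=(Q,V,\Delta,q_0)$: $Q=\{R_\gamma\mid\gamma\in V^*\}$, $q_0=R_\varepsilon$, and $\Delta(R_\gamma,A)=(R_{A\gamma},\alpha)$ where $\alpha$ is the lexicographically smallest among the longest strings satisfying (a) and (b) above. *)

theory Defs
  imports Main
begin

(* A BPA system: variables are the elements of the finite type 'v (so V^* = 'v list),
   actions of type 'a with a distinguished silent action tau,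
   rules R :: ('v * 'a * 'v list) set, a rule (A,a,alpha) meaning A --a--> alpha. *)

definition bpa_step :: "('v \<times> 'a \<times> 'v list) set \<Rightarrow> 'v list \<Rightarrow> 'a \<Rightarrow> 'v list \<Rightarrow> bool" where
  "bpa_step R s a t \<longleftrightarrow> (\<exists>A \<beta> \<alpha>. s = A # \<beta> \<and> (A, a, \<alpha>) \<in> R \<and> t = \<alpha> @ \<beta>)"

definition normed :: "('v \<times> 'a \<times> 'v list) set \<Rightarrow> bool" where
  "normed R \<longleftrightarrow> (\<forall>A. (\<lambda>s t. \<exists>a. bpa_step R s a t)\<^sup>*\<^sup>* [A] [])"

(* tau_path R tau P t t'' : t = t_0 --tau--> ... --tau--> t_k = t'' with P t_i for i in [1,k] *)
inductive tau_path :: "('v \<times> 'a \<times> 'v list) set \<Rightarrow> 'a \<Rightarrow> ('v list \<Rightarrow> bool) \<Rightarrow> 'v list \<Rightarrow> 'v list \<Rightarrow> bool"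
  for R tau P where
  tp_refl: "tau_path R tau P t t"
| tp_step: "bpa_step R t tau u \<Longrightarrow> P u \<Longrightarrow> tau_path R tau P u w \<Longrightarrow> tau_path R tau P t w"

definition bb_transfer :: "('v \<times> 'a \<times> 'v list) set \<Rightarrow> 'a \<Rightarrow> ('v list \<times> 'v list) set \<Rightarrow> bool" where
  "bb_transfer R tau B \<longleftrightarrow>
     (\<forall>s t. (s, t) \<in> B \<longrightarrow> (\<forall>a s'. bpa_step R s a s' \<longrightarrow>
        (a = tau \<and> (s', t) \<in> B) \<or>
        (\<exists>t'' t'. tau_path R tau (\<lambda>u. (s, u) \<in> B) t t'' \<and> bpa_step R t'' a t' \<and> (s', t') \<in> B)))"

definition branching_bisim :: "('v \<times> 'a \<times> 'v list) set \<Rightarrow> 'a \<Rightarrow> ('v list \<times> 'v list) set \<Rightarrow> bool" where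
  "branching_bisim R tau B \<longleftrightarrow> bb_transfer R tau B \<and> bb_transfer R tau (B\<inverse>)"

definition bbsim :: "('v \<times> 'a \<times> 'v list) set \<Rightarrow> 'a \<Rightarrow> 'v list \<Rightarrow> 'v list \<Rightarrow> bool" where
  "bbsim R tau s t \<longleftrightarrow> (\<exists>B. branching_bisim R tau B \<and> (s, t) \<in> B)"

definition Rset :: "('v \<times> 'a \<times> 'v list) set \<Rightarrow> 'a \<Rightarrow> 'v list \<Rightarrow> 'v set" where
  "Rset R tau \<gamma> = {X. bbsim R tau (X # \<gamma>) \<gamma>}"

definition redundancy_free :: "('v \<times> 'a \<times> 'v list) set \<Rightarrow> 'a \<Rightarrow> 'v list \<Rightarrow> 'v list \<Rightarrow> bool" where
  "redundancy_free R tau \<alpha> \<gamma> \<longleftrightarrow>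
     \<not> (\<exists>\<delta> X \<beta>. \<alpha> = \<delta> @ X # \<beta> \<and> bbsim R tau (X # \<beta> @ \<gamma>) (\<beta> @ \<gamma>))"

definition cand :: "('v \<times> 'a \<times> 'v list) set \<Rightarrow> 'a \<Rightarrow> 'v \<Rightarrow> 'v list \<Rightarrow> 'v list set" where
  "cand R tau A \<gamma> = {\<alpha>. bbsim R tau (\<alpha> @ \<gamma>) (A # \<gamma>) \<and> redundancy_free R tau \<alpha> \<gamma>}"

definition lex_smaller :: "'v::linorder list \<Rightarrow> 'v list \<Rightarrow> bool" where
  "lex_smaller \<alpha> \<beta> \<longleftrightarrow>
     (\<exists>\<delta>. \<delta> \<noteq> [] \<and> \<beta> = \<delta> @ \<alpha>) \<or>
     (\<exists>\<alpha>' \<beta>' A B \<gamma>. \<alpha> = \<alpha>' @ A # \<gamma> \<and> \<beta> = \<beta>' @ B # \<gamma> \<and> A < B)"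

definition transducer_output :: "('v::linorder \<times> 'a \<times> 'v list) set \<Rightarrow> 'a \<Rightarrow> 'v \<Rightarrow> 'v list \<Rightarrow> 'v list \<Rightarrow> bool" where
  "transducer_output R tau A \<gamma> \<alpha> \<longleftrightarrow>
     \<alpha> \<in> cand R tau A \<gamma> \<and>
     (\<forall>\<beta>\<in>cand R tau A \<gamma>. length \<beta> \<le> length \<alpha>) \<and>
     (\<forall>\<beta>\<in>cand R tau A \<gamma>. length \<beta> = length \<alpha> \<longrightarrow> \<beta> \<noteq> \<alpha> \<longrightarrow> lex_smaller \<alpha> \<beta>)"

end

theory Submission
  imports Defs "HOL-Library.List_Lexorder"
begin

lemma step_Nil[simp]: "\<not> bpa_step R [] a t"
  by (simp add: bpa_step_def)

lemma step_Cons: "bpa_step R (X # \<beta>) a t \<longleftrightarrow> (\<exists>\<alpha>. (X, a, \<alpha>) \<in> R \<and> t = \<alpha> @ \<beta>)"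
  by (auto simp add: bpa_step_def)

lemma step_append: "bpa_step R s a t \<Longrightarrow> bpa_step R (s @ \<beta>) a (t @ \<beta>)"
  by (auto simp add: bpa_step_def)

lemma step_app_lift:
  assumes "bpa_step R (\<zeta> @ \<gamma>) a u" "\<zeta> \<noteq> []"
  shows "\<exists>\<zeta>'. u = \<zeta>' @ \<gamma> \<and> (\<forall>\<delta>. bpa_step R (\<zeta> @ \<delta>) a (\<zeta>' @ \<delta>))"
proof -
  obtain X \<zeta>1 where z: "\<zeta> = X # \<zeta>1" using assms(2) by (cases \<zeta>) auto
  from assms(1) obtain \<alpha> where "(X, a, \<alpha>) \<in> R" "u = \<alpha> @ \<zeta>1 @ \<gamma>"
    by (auto simp: z step_Cons)
  then show ?thesis
    by (intro exI[of _ "\<alpha> @ \<zeta>1"]) (auto simp: z step_Cons)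
qed

lemma tau_path_mono:
  "tau_path R tau P x y \<Longrightarrow> (\<And>u. P u \<Longrightarrow> Q u) \<Longrightarrow> tau_path R tau Q x y"
  by (induction rule: tau_path.induct) (auto intro: tau_path.intros)

lemma tau_path_trans:
  "tau_path R tau P x y \<Longrightarrow> tau_path R tau P y z \<Longrightarrow> tau_path R tau P x z"
  by (induction rule: tau_path.induct) (auto intro: tau_path.intros)

lemma tau_path_last:
  "tau_path R tau P x y \<Longrightarrow> P x \<Longrightarrow> P y"
  by (induction rule: tau_path.induct) auto

lemma tau_path_snoc:
  "tau_path R tau P x w \<Longrightarrow> x = w \<or> (\<exists>y. tau_path R tau P x y \<and> bpa_step R y tau w \<and> P w)"
proof (induction rule: tau_path.induct)
  case (tp_refl t)
  then show ?case by simp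
next
  case (tp_step t u w)
  show ?case
  proof (cases "u = w")
    case True
    then show ?thesis using tp_step by (auto intro: tau_path.intros)
  next
    case False
    then obtain y where "tau_path R tau P u y" "bpa_step R y tau w" "P w" using tp_step by auto
    then show ?thesis using tp_step by (auto intro: tau_path.intros)
  qed
qed

lemma tau_path_Nil: "tau_path R tau P [] w \<Longrightarrow> w = []"
  by (erule tau_path.cases) auto

section \<open>Transfer and bisimilarity as equivalence\<close>

lemma bb_transferD:
  assumes "bb_transfer R tau B" "(s, t) \<in> B" "B \<subseteq> B'" "bpa_step R s a s'"
  shows "(a = tau \<and> (s', t) \<in> B') \<or>
        (\<exists>t'' t'. tau_path R tau (\<lambda>u. (s, u) \<in> B') t t'' \<and> bpa_step R t'' a t' \<and> (s', t') \<in> B')"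
proof -
  from assms(1,2,4) have "(a = tau \<and> (s', t) \<in> B) \<or>
        (\<exists>t'' t'. tau_path R tau (\<lambda>u. (s, u) \<in> B) t t'' \<and> bpa_step R t'' a t' \<and> (s', t') \<in> B)"
    unfolding bb_transfer_def by blast
  then show ?thesis
  proof
    assume "a = tau \<and> (s', t) \<in> B" then show ?thesis using assms(3) by blast
  next
    assume "\<exists>t'' t'. tau_path R tau (\<lambda>u. (s, u) \<in> B) t t'' \<and> bpa_step R t'' a t' \<and> (s', t') \<in> B"
    then obtain t'' t' where "tau_path R tau (\<lambda>u. (s, u) \<in> B) t t''" "bpa_step R t'' a t'" "(s', t') \<in> B"
      by blast
    moreover have "tau_path R tau (\<lambda>u. (s, u) \<in> B') t t''"
      by (rule tau_path_mono[OF calculation(1)]) (use assms(3) in blast)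
    ultimately show ?thesis using assms(3) by blast
  qed
qed

definition BB :: "('v \<times> 'a \<times> 'v list) set \<Rightarrow> 'a \<Rightarrow> ('v list \<times> 'v list) set" where
  "BB R tau = {(s, t). bbsim R tau s t}"

lemma BB_bisim: "branching_bisim R tau (BB R tau)"
proof -
  have "bb_transfer R tau (BB R tau)"
    unfolding bb_transfer_def
  proof (intro allI impI)
    fix s t a s' assume "(s, t) \<in> BB R tau" "bpa_step R s a s'"
    then obtain B where B: "branching_bisim R tau B" "(s, t) \<in> B" by (auto simp: BB_def bbsim_def)
    have "B \<subseteq> BB R tau" using B(1) by (auto simp: BB_def bbsim_def)
    then show "(a = tau \<and> (s', t) \<in> BB R tau) \<or>
        (\<exists>t'' t'. tau_path R tau (\<lambda>u. (s, u) \<in> BB R tau) t t'' \<and> bpa_step R t'' a t' \<and> (s', t') \<in> BB R tau)"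
      using bb_transferD[of R tau B s t "BB R tau" a s'] B \<open>bpa_step R s a s'\<close>
      by (auto simp: branching_bisim_def)
  qed
  moreover have "bb_transfer R tau ((BB R tau)\<inverse>)"
    unfolding bb_transfer_def
  proof (intro allI impI)
    fix s t a s' assume "(s, t) \<in> (BB R tau)\<inverse>" "bpa_step R s a s'"
    then obtain B where B: "branching_bisim R tau B" "(s, t) \<in> B\<inverse>" by (auto simp: BB_def bbsim_def)
    have "B\<inverse> \<subseteq> (BB R tau)\<inverse>" using B(1) by (auto simp: BB_def bbsim_def)
    then show "(a = tau \<and> (s', t) \<in> (BB R tau)\<inverse>) \<or>
        (\<exists>t'' t'. tau_path R tau (\<lambda>u. (s, u) \<in> (BB R tau)\<inverse>) t t'' \<and> bpa_step R t'' a t' \<and> (s', t') \<in> (BB R tau)\<inverse>)"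
      using bb_transferD[of R tau "B\<inverse>" s t "(BB R tau)\<inverse>" a s'] B \<open>bpa_step R s a s'\<close>
      by (auto simp: branching_bisim_def)
  qed
  ultimately show ?thesis by (simp add: branching_bisim_def)
qed

lemma bisim_sub_BB: "branching_bisim R tau B \<Longrightarrow> B \<subseteq> BB R tau"
  by (auto simp: BB_def bbsim_def)

lemma bbsim_refl: "bbsim R tau s s"
proof -
  have "bb_transfer R tau Id"
    unfolding bb_transfer_def by (auto intro: tau_path.intros)
  then have "branching_bisim R tau Id" by (simp add: branching_bisim_def)
  then show ?thesis unfolding bbsim_def by blast
qed

lemma bbsim_sym: "bbsim R tau s t \<Longrightarrow> bbsim R tau t s"
  unfolding bbsim_def branching_bisim_def
  by (metis converseI converse_converse)

lemma transfer_path: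
  assumes T2: "bb_transfer R tau B2"
  shows "tau_path R tau P t t'' \<Longrightarrow> P = (\<lambda>v. (s, v) \<in> B1) \<Longrightarrow> (s, t) \<in> B1 \<Longrightarrow> (t, u) \<in> B2 \<Longrightarrow>
     \<exists>u''. tau_path R tau (\<lambda>w. (s, w) \<in> B1 O B2) u u'' \<and> (t'', u'') \<in> B2"
proof (induction arbitrary: u rule: tau_path.induct)
  case (tp_refl t)
  then show ?case by (auto intro: tau_path.intros)
next
  case (tp_step t v w)
  have sv: "(s, v) \<in> B1" using tp_step by simp
  from bb_transferD[OF T2 \<open>(t, u) \<in> B2\<close> order_refl \<open>bpa_step R t tau v\<close>]
  show ?case
  proof
    assume "tau = tau \<and> (v, u) \<in> B2"
    then show ?thesis using tp_step.IH[OF tp_step.prems(1) sv] by blast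
  next
    assume "\<exists>t'' t'. tau_path R tau (\<lambda>x. (t, x) \<in> B2) u t'' \<and> bpa_step R t'' tau t' \<and> (v, t') \<in> B2"
    then obtain u1'' u1 where p: "tau_path R tau (\<lambda>x. (t, x) \<in> B2) u u1''" "bpa_step R u1'' tau u1" "(v, u1) \<in> B2"
      by blast
    obtain u'' where q: "tau_path R tau (\<lambda>w. (s, w) \<in> B1 O B2) u1 u''" "(w, u'') \<in> B2"
      using tp_step.IH[OF tp_step.prems(1) sv p(3)] by blast
    have p1: "tau_path R tau (\<lambda>w. (s, w) \<in> B1 O B2) u u1''"
      by (rule tau_path_mono[OF p(1)]) (use tp_step.prems(2) in blast)
    have "tau_path R tau (\<lambda>w. (s, w) \<in> B1 O B2) u1'' u''"
      by (rule tau_path.tp_step[OF p(2)]) (use sv p(3) q(1) in blast)+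
    then show ?thesis using tau_path_trans[OF p1] q(2) by blast
  qed
qed

lemma transfer_comp:
  assumes T1: "bb_transfer R tau B1" and T2: "bb_transfer R tau B2"
  shows "bb_transfer R tau (B1 O B2)"
  unfolding bb_transfer_def
proof (intro allI impI)
  fix s u a s'
  assume "(s, u) \<in> B1 O B2" "bpa_step R s a s'"
  then obtain t where st: "(s, t) \<in> B1" and tu: "(t, u) \<in> B2" by blast
  let ?Q = "\<lambda>w. (s, w) \<in> B1 O B2"
  from bb_transferD[OF T1 st order_refl \<open>bpa_step R s a s'\<close>]
  show "(a = tau \<and> (s', u) \<in> B1 O B2) \<or>
        (\<exists>t'' t'. tau_path R tau ?Q u t'' \<and> bpa_step R t'' a t' \<and> (s', t') \<in> B1 O B2)"
  proof
    assume "a = tau \<and> (s', t) \<in> B1" then show ?thesis using tu by blast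
  next
    assume "\<exists>t'' t'. tau_path R tau (\<lambda>x. (s, x) \<in> B1) t t'' \<and> bpa_step R t'' a t' \<and> (s', t') \<in> B1"
    then obtain t'' t' where h: "tau_path R tau (\<lambda>x. (s, x) \<in> B1) t t''" "bpa_step R t'' a t'" "(s', t') \<in> B1"
      by blast
    have st'': "(s, t'') \<in> B1" using tau_path_last[OF h(1)] st by simp
    obtain u'' where u: "tau_path R tau ?Q u u''" "(t'', u'') \<in> B2"
      using transfer_path[OF T2 h(1) refl st tu] by blast
    from bb_transferD[OF T2 u(2) order_refl h(2)]
    show ?thesis
    proof
      assume a: "a = tau \<and> (t', u'') \<in> B2"
      then have su'': "(s', u'') \<in> B1 O B2" using h(3) by blast
      from tau_path_snoc[OF u(1)] show ?thesis
      proof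
        assume "u = u''" then show ?thesis using a su'' by blast
      next
        assume "\<exists>y. tau_path R tau ?Q u y \<and> bpa_step R y tau u'' \<and> ?Q u''"
        then show ?thesis using a su'' by blast
      qed
    next
      assume "\<exists>x y. tau_path R tau (\<lambda>w. (t'', w) \<in> B2) u'' x \<and> bpa_step R x a y \<and> (t', y) \<in> B2"
      then obtain x y where g: "tau_path R tau (\<lambda>w. (t'', w) \<in> B2) u'' x" "bpa_step R x a y" "(t', y) \<in> B2"
        by blast
      have "tau_path R tau ?Q u'' x" by (rule tau_path_mono[OF g(1)]) (use st'' in blast)
      then have "tau_path R tau ?Q u x" using tau_path_trans[OF u(1)] by blast
      then show ?thesis using g h(3) by blast
    qed
  qed
qed

lemma bbsim_trans: "bbsim R tau s t \<Longrightarrow> bbsim R tau t u \<Longrightarrow> bbsim R tau s u"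
proof -
  assume "bbsim R tau s t" "bbsim R tau t u"
  then obtain B1 B2 where "branching_bisim R tau B1" "(s, t) \<in> B1" "branching_bisim R tau B2" "(t, u) \<in> B2"
    unfolding bbsim_def by blast
  moreover have "branching_bisim R tau (B1 O B2)" if "branching_bisim R tau B1" "branching_bisim R tau B2"
    using that transfer_comp[of R tau B1 B2] transfer_comp[of R tau "B2\<inverse>" "B1\<inverse>"]
    by (simp add: branching_bisim_def converse_relcomp)
  ultimately show ?thesis unfolding bbsim_def by blast
qed


lemma BB_transfer: "bbsim R tau s t \<Longrightarrow> BB R tau \<subseteq> B' \<Longrightarrow> bpa_step R s a s' \<Longrightarrow>
    (a = tau \<and> (s', t) \<in> B') \<or>
    (\<exists>t'' t'. tau_path R tau (\<lambda>u. (s, u) \<in> B') t t'' \<and> bpa_step R t'' a t' \<and> (s', t') \<in> B')"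
  using bb_transferD[of R tau "BB R tau" s t B' a s'] BB_bisim[of R tau]
  by (auto simp: branching_bisim_def BB_def)

lemma BB_transfer':
  assumes "bbsim R tau s t" "bpa_step R s a s'"
  shows "(a = tau \<and> bbsim R tau s' t) \<or>
    (\<exists>t'' t'. tau_path R tau (\<lambda>u. bbsim R tau s u) t t'' \<and> bpa_step R t'' a t' \<and> bbsim R tau s' t')"
  using BB_transfer[OF assms(1) order_refl assms(2)] by (simp add: BB_def)

lemma sym_transfer_bisim:
  assumes "sym B" "bb_transfer R tau B" "(s, t) \<in> B"
  shows "bbsim R tau s t"
proof -
  have "B\<inverse> = B" using assms(1) by (simp add: sym_conv_converse_eq)
  then have "branching_bisim R tau B" using assms(2) by (simp add: branching_bisim_def)
  then show ?thesis using assms(3) unfolding bbsim_def by blast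
qed

section \<open>Left congruence\<close>

lemma bbsim_lcong:
  assumes "bbsim R tau s t"
  shows "bbsim R tau (\<zeta> @ s) (\<zeta> @ t)"
proof -
  define C where "C = {(\<zeta> @ s, \<zeta> @ t) | \<zeta> s t. bbsim R tau s t}"
  have BBC: "BB R tau \<subseteq> C" unfolding C_def BB_def by force
  have "sym C" unfolding C_def sym_def by (auto intro: bbsim_sym)
  moreover have "bb_transfer R tau C"
    unfolding bb_transfer_def
  proof (intro allI impI)
    fix x y a x' assume "(x, y) \<in> C" "bpa_step R x a x'"
    then obtain \<zeta> s t where h: "x = \<zeta> @ s" "y = \<zeta> @ t" "bbsim R tau s t" unfolding C_def by blast
    show "(a = tau \<and> (x', y) \<in> C) \<or>
        (\<exists>t'' t'. tau_path R tau (\<lambda>u. (x, u) \<in> C) y t'' \<and> bpa_step R t'' a t' \<and> (x', t') \<in> C)"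
    proof (cases \<zeta>)
      case Nil
      then show ?thesis using BB_transfer[OF h(3) BBC] \<open>bpa_step R x a x'\<close> h by simp
    next
      case (Cons X \<zeta>1)
      then obtain \<alpha> where r: "(X, a, \<alpha>) \<in> R" "x' = \<alpha> @ \<zeta>1 @ s"
        using \<open>bpa_step R x a x'\<close> h by (auto simp: step_Cons)
      have "bpa_step R y a (\<alpha> @ \<zeta>1 @ t)" using r h Cons by (auto simp: step_Cons)
      moreover have "((\<alpha> @ \<zeta>1) @ s, (\<alpha> @ \<zeta>1) @ t) \<in> C" unfolding C_def using h(3) by blast
      then have "(x', \<alpha> @ \<zeta>1 @ t) \<in> C" using r(2) by simp
      ultimately show ?thesis by (blast intro: tau_path.tp_refl)
    qed
  qed
  moreover have "(\<zeta> @ s, \<zeta> @ t) \<in> C" using assms unfolding C_def by blast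
  ultimately show ?thesis by (rule sym_transfer_bisim)
qed

section \<open>Norms\<close>

abbreviation reach :: "('v \<times> 'a \<times> 'v list) set \<Rightarrow> 'v list \<Rightarrow> 'v list \<Rightarrow> bool" where
  "reach R \<equiv> (\<lambda>s t. \<exists>a. bpa_step R s a t)\<^sup>*\<^sup>*"

lemma reach_append: "reach R s t \<Longrightarrow> reach R (s @ \<beta>) (t @ \<beta>)"
proof (induction rule: rtranclp_induct)
  case base then show ?case by simp
next
  case (step y z)
  then show ?case by (metis (mono_tags, lifting) rtranclp.rtrancl_into_rtrancl step_append)
qed

lemma normed_reach: "normed R \<Longrightarrow> reach R s []"
proof (induction s)
  case Nil then show ?case by simp
next
  case (Cons X s)
  have "reach R ([X] @ s) ([] @ s)" using Cons.prems reach_append unfolding normed_def by blast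
  then show ?case using Cons by simp
qed

inductive ipath :: "('v \<times> 'a \<times> 'v list) set \<Rightarrow> 'a \<Rightarrow> 'v list \<Rightarrow> nat \<Rightarrow> bool" for R tau where
  ip_nil: "ipath R tau [] 0"
| ip_step: "bpa_step R s a s' \<Longrightarrow> ipath R tau s' k \<Longrightarrow>
     ipath R tau s (if a = tau \<and> bbsim R tau s s' then k else Suc k)"

definition bn :: "('v \<times> 'a \<times> 'v list) set \<Rightarrow> 'a \<Rightarrow> 'v list \<Rightarrow> nat" where
  "bn R tau s = (LEAST k. ipath R tau s k)"

lemma ex_ipath: "normed R \<Longrightarrow> \<exists>k. ipath R tau s k"
proof -
  assume "normed R"
  then have "reach R s []" by (rule normed_reach)
  then show ?thesis
  proof (induction rule: converse_rtranclp_induct)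
    case base then show ?case by (blast intro: ip_nil)
  next
    case (step y z)
    then show ?case by (blast intro: ip_step)
  qed
qed

lemma bn_le: "ipath R tau s k \<Longrightarrow> bn R tau s \<le> k"
  unfolding bn_def by (rule Least_le)

lemma ipath_bn: "normed R \<Longrightarrow> ipath R tau s (bn R tau s)"
  unfolding bn_def by (rule LeastI_ex) (rule ex_ipath)

lemma bn_Nil: "bn R tau [] = 0"
  using bn_le[OF ip_nil] by simp

lemma through:
  "ipath R tau s k \<Longrightarrow> s = \<eta> @ \<gamma> \<Longrightarrow>
     bn R tau \<gamma> \<le> k \<and> (\<not> bbsim R tau (\<eta> @ \<gamma>) \<gamma> \<longrightarrow> Suc (bn R tau \<gamma>) \<le> k)"
proof (induction arbitrary: \<eta> rule: ipath.induct)
  case ip_nil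
  then show ?case by (simp add: bn_Nil bbsim_refl)
next
  case (ip_step s a s' k)
  define kk where "kk = (if a = tau \<and> bbsim R tau s s' then k else Suc k)"
  have ipk: "ipath R tau s kk" unfolding kk_def by (rule ipath.ip_step[OF ip_step.hyps])
  have "bn R tau \<gamma> \<le> kk \<and> (\<not> bbsim R tau (\<eta> @ \<gamma>) \<gamma> \<longrightarrow> Suc (bn R tau \<gamma>) \<le> kk)"
  proof (cases \<eta>)
    case Nil
    then have "ipath R tau \<gamma> kk" using ip_step.prems ipk by simp
    then have "bn R tau \<gamma> \<le> kk" by (rule bn_le)
    moreover have "bbsim R tau (\<eta> @ \<gamma>) \<gamma>" using Nil bbsim_refl by simp
    ultimately show ?thesis by blast
  next
    case (Cons X \<eta>1)
    then obtain \<alpha> where s': "s' = (\<alpha> @ \<eta>1) @ \<gamma>"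
      using ip_step.hyps(1) ip_step.prems Cons by (auto simp: step_Cons)
    have IH: "bn R tau \<gamma> \<le> k" "\<not> bbsim R tau ((\<alpha> @ \<eta>1) @ \<gamma>) \<gamma> \<Longrightarrow> Suc (bn R tau \<gamma>) \<le> k"
      using ip_step.IH[OF s'] by blast+
    show ?thesis
    proof (cases "a = tau \<and> bbsim R tau s s'")
      case True
      then have kk: "kk = k" unfolding kk_def by simp
      have D: "bbsim R tau (\<eta> @ \<gamma>) ((\<alpha> @ \<eta>1) @ \<gamma>)"
        using True unfolding ip_step.prems[symmetric] s'[symmetric] by blast
      have "\<not> bbsim R tau ((\<alpha> @ \<eta>1) @ \<gamma>) \<gamma>" if "\<not> bbsim R tau (\<eta> @ \<gamma>) \<gamma>"
        using that bbsim_trans[OF D] by blast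
      then show ?thesis using IH unfolding kk by blast
    next
      case False
      then have kk: "kk = Suc k" unfolding kk_def by simp
      show ?thesis using IH unfolding kk by simp
    qed
  qed
  then show ?case unfolding kk_def .
qed

lemma sim_nil_ipath:
  assumes "normed R" "bbsim R tau s []"
  shows "ipath R tau s 0"
proof -
  have "reach R s []" using assms(1) by (rule normed_reach)
  then show ?thesis using assms(2)
  proof (induction rule: converse_rtranclp_induct)
    case base show ?case by (rule ip_nil)
  next
    case (step y z)
    then obtain a where st: "bpa_step R y a z" by blast
    have "\<not> (\<exists>t'' t'. tau_path R tau (\<lambda>u. bbsim R tau y u) [] t'' \<and> bpa_step R t'' a t' \<and> bbsim R tau z t')"
    proof
      assume "\<exists>t'' t'. tau_path R tau (\<lambda>u. bbsim R tau y u) [] t'' \<and> bpa_step R t'' a t' \<and> bbsim R tau z t'"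
      then obtain t'' t' where "tau_path R tau (\<lambda>u. bbsim R tau y u) [] t''" "bpa_step R t'' a t'" by blast
      then show False using tau_path_Nil by fastforce
    qed
    then have a: "a = tau" and zn: "bbsim R tau z []" using BB_transfer'[OF step.prems st] by blast+
    have yz: "bbsim R tau y z" using bbsim_trans[OF step.prems bbsim_sym[OF zn]] .
    have "ipath R tau z 0" using step.IH zn by blast
    from ip_step[OF st this] show ?case using a yz by simp
  qed
qed

lemma path_back_ipath:
  "tau_path R tau P x y \<Longrightarrow> P = bbsim R tau t \<Longrightarrow> bbsim R tau t x \<Longrightarrow> ipath R tau y m \<Longrightarrow> ipath R tau x m"
proof (induction rule: tau_path.induct)
  case (tp_refl x)
  then show ?case by simp
next
  case (tp_step x u w)
  have tu: "bbsim R tau t u" using tp_step.hyps(2) tp_step.prems(1) by simp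
  have iu: "ipath R tau u m" using tp_step.IH[OF tp_step.prems(1) tu tp_step.prems(3)] .
  have xu: "bbsim R tau x u" using bbsim_trans[OF bbsim_sym[OF tp_step.prems(2)] tu] .
  have "ipath R tau x (if tau = tau \<and> bbsim R tau x u then m else Suc m)"
    by (rule ip_step[OF tp_step.hyps(1) iu])
  then show ?case using xu by simp
qed

lemma bisim_ipath:
  assumes "normed R"
  shows "ipath R tau t k \<Longrightarrow> bbsim R tau s t \<Longrightarrow> \<exists>k'\<le>k. ipath R tau s k'"
proof (induction arbitrary: s rule: ipath.induct)
  case ip_nil
  then show ?case using sim_nil_ipath[OF assms] by blast
next
  case (ip_step t a t' k s)
  define kk where "kk = (if a = tau \<and> bbsim R tau t t' then k else Suc k)"
  have kkk: "k \<le> kk" unfolding kk_def by simp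
  have "\<exists>k'\<le>kk. ipath R tau s k'"
  proof (rule disjE[OF BB_transfer'[OF bbsim_sym[OF ip_step.prems] ip_step.hyps(1)]])
    assume "a = tau \<and> bbsim R tau t' s"
    then have "bbsim R tau t' s" by blast
    then have "bbsim R tau s t'" by (rule bbsim_sym)
    then obtain k' where "k' \<le> k" "ipath R tau s k'" using ip_step.IH by blast
    then show ?thesis using kkk by (intro exI[of _ k']) auto
  next
    assume "\<exists>t'' t'a. tau_path R tau (bbsim R tau t) s t'' \<and> bpa_step R t'' a t'a \<and> bbsim R tau t' t'a"
    then obtain s'' s' where h: "tau_path R tau (bbsim R tau t) s s''" "bpa_step R s'' a s'" "bbsim R tau t' s'"
      by blast
    have "bbsim R tau s' t'" using bbsim_sym[OF h(3)] .
    then obtain k'' where k'': "k'' \<le> k" "ipath R tau s' k''" using ip_step.IH by blast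
    define m where "m = (if a = tau \<and> bbsim R tau s'' s' then k'' else Suc k'')"
    have mp: "ipath R tau s'' m" unfolding m_def by (rule ipath.ip_step[OF h(2) k''(2)])
    have ts: "bbsim R tau t s" using bbsim_sym[OF ip_step.prems] .
    have ts'': "bbsim R tau t s''" using tau_path_last[OF h(1)] ts by blast
    have "m \<le> kk"
    proof (cases "a = tau \<and> bbsim R tau t t'")
      case True
      then have "bbsim R tau t t'" by blast
      then have "bbsim R tau s'' s'" using bbsim_trans[OF bbsim_sym[OF ts''] bbsim_trans[OF _ h(3)]] by blast
      then show ?thesis using True k'' unfolding m_def kk_def by simp
    next
      case False
      then show ?thesis using k'' unfolding m_def kk_def by auto
    qed
    moreover have "ipath R tau s m"
      by (rule path_back_ipath[OF h(1) refl ts mp])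
    ultimately show ?thesis by blast
  qed
  then show ?case unfolding kk_def .
qed

lemma L4:
  assumes "normed R" "bbsim R tau (X # \<eta> @ \<gamma>) \<gamma>"
  shows "bbsim R tau (\<eta> @ \<gamma>) \<gamma>"
proof (rule ccontr)
  assume n: "\<not> bbsim R tau (\<eta> @ \<gamma>) \<gamma>"
  obtain k' where k': "k' \<le> bn R tau \<gamma>" "ipath R tau (X # \<eta> @ \<gamma>) k'"
    using bisim_ipath[OF assms(1) ipath_bn[OF assms(1)] assms(2)] by blast
  have "bn R tau (\<eta> @ \<gamma>) \<le> k'" using through[OF k'(2), of "[X]" "\<eta> @ \<gamma>"] by simp
  moreover have "Suc (bn R tau \<gamma>) \<le> bn R tau (\<eta> @ \<gamma>)"
    using through[OF ipath_bn[OF assms(1)], of "\<eta> @ \<gamma>" \<eta> \<gamma>] n by simp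
  ultimately show False using k'(1) by simp
qed

lemma L3:
  assumes "normed R" "Rset R tau \<gamma> = Rset R tau \<delta>"
  shows "bbsim R tau (\<zeta> @ \<gamma>) \<gamma> \<Longrightarrow> bbsim R tau (\<zeta> @ \<delta>) \<delta>"
proof (induction \<zeta>)
  case Nil
  then show ?case by (simp add: bbsim_refl)
next
  case (Cons X \<eta>)
  have e\<gamma>: "bbsim R tau (\<eta> @ \<gamma>) \<gamma>" using L4[OF assms(1)] Cons.prems by simp
  then have e\<delta>: "bbsim R tau (\<eta> @ \<delta>) \<delta>" using Cons.IH by simp
  have c1: "bbsim R tau (X # \<eta> @ \<gamma>) (X # \<gamma>)" using bbsim_lcong[OF e\<gamma>, of "[X]"] by simp
  have "bbsim R tau (X # \<gamma>) \<gamma>" using bbsim_trans[OF bbsim_sym[OF c1] Cons.prems[simplified]] .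
  then have "X \<in> Rset R tau \<gamma>" by (simp add: Rset_def)
  then have "X \<in> Rset R tau \<delta>" using assms(2) by simp
  then have c2: "bbsim R tau (X # \<delta>) \<delta>" by (simp add: Rset_def)
  have c3: "bbsim R tau (X # \<eta> @ \<delta>) (X # \<delta>)" using bbsim_lcong[OF e\<delta>, of "[X]"] by simp
  show ?case using bbsim_trans[OF c3 c2] by simp
qed


lemma lift_path:
  "tau_path R tau P s w \<Longrightarrow> s = \<beta> @ \<gamma> \<Longrightarrow> \<beta> \<noteq> [] \<Longrightarrow>
    (\<forall>\<zeta>. P (\<zeta> @ \<gamma>) \<longrightarrow> \<zeta> \<noteq> [] \<and> Q (\<zeta> @ \<delta>)) \<Longrightarrow>
    \<exists>\<zeta>. w = \<zeta> @ \<gamma> \<and> \<zeta> \<noteq> [] \<and> tau_path R tau Q (\<beta> @ \<delta>) (\<zeta> @ \<delta>)"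
proof (induction arbitrary: \<beta> rule: tau_path.induct)
  case (tp_refl x)
  then show ?case by (blast intro: tau_path.tp_refl)
next
  case (tp_step x u w)
  obtain \<zeta>' where z: "u = \<zeta>' @ \<gamma>" "\<forall>\<delta>. bpa_step R (\<beta> @ \<delta>) tau (\<zeta>' @ \<delta>)"
    using step_app_lift[of R "\<beta>" \<gamma> tau u] tp_step.hyps(1) tp_step.prems(1,2) by blast
  have pz: "\<zeta>' \<noteq> []" "Q (\<zeta>' @ \<delta>)" using tp_step.hyps(2) tp_step.prems(3) z(1) by blast+
  obtain \<zeta> where "w = \<zeta> @ \<gamma>" "\<zeta> \<noteq> []" "tau_path R tau Q (\<zeta>' @ \<delta>) (\<zeta> @ \<delta>)"
    using tp_step.IH[OF z(1) pz(1) tp_step.prems(3)] by blast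
  moreover have "tau_path R tau Q (\<beta> @ \<delta>) (\<zeta> @ \<delta>)"
    by (rule tau_path.tp_step[OF spec[OF z(2)] pz(2) calculation(3)])
  ultimately show ?case by blast
qed

lemma P1:
  assumes nr: "normed R" and eq: "Rset R tau \<gamma> = Rset R tau \<delta>"
    and h: "bbsim R tau (\<alpha> @ \<gamma>) (\<beta> @ \<gamma>)"
  shows "bbsim R tau (\<alpha> @ \<delta>) (\<beta> @ \<delta>)"
proof -
  define B where "B = {(\<alpha> @ \<delta>, \<beta> @ \<delta>) | \<alpha> \<beta>. bbsim R tau (\<alpha> @ \<gamma>) (\<beta> @ \<gamma>)} \<union> BB R tau"
  have BBB: "BB R tau \<subseteq> B" unfolding B_def by blast
  have "sym B" unfolding B_def BB_def sym_def by (auto intro: bbsim_sym)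
  moreover have "bb_transfer R tau B"
    unfolding bb_transfer_def
  proof (intro allI impI)
    fix x y a x' assume xy: "(x, y) \<in> B" and st: "bpa_step R x a x'"
    show "(a = tau \<and> (x', y) \<in> B) \<or>
        (\<exists>t'' t'. tau_path R tau (\<lambda>u. (x, u) \<in> B) y t'' \<and> bpa_step R t'' a t' \<and> (x', t') \<in> B)"
    proof (cases "(x, y) \<in> BB R tau")
      case True
      then show ?thesis using BB_transfer[OF _ BBB st] by (simp add: BB_def)
    next
      case False
      then obtain \<alpha> \<beta> where xy': "x = \<alpha> @ \<delta>" "y = \<beta> @ \<delta>" "bbsim R tau (\<alpha> @ \<gamma>) (\<beta> @ \<gamma>)"
        using xy unfolding B_def by blast
      show ?thesis
      proof (cases "bbsim R tau (\<alpha> @ \<gamma>) \<gamma>")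
        case True
        have "bbsim R tau (\<beta> @ \<gamma>) \<gamma>" using bbsim_trans[OF bbsim_sym[OF xy'(3)] True] .
        then have d1: "bbsim R tau (\<beta> @ \<delta>) \<delta>" using L3[OF nr eq] by blast
        have d2: "bbsim R tau (\<alpha> @ \<delta>) \<delta>" using L3[OF nr eq True] .
        have "bbsim R tau x y" using bbsim_trans[OF d2 bbsim_sym[OF d1]] xy' by simp
        then show ?thesis using BB_transfer[OF _ BBB st] by blast
      next
        case nsim: False
        have an: "\<alpha> \<noteq> []" using nsim bbsim_refl by fastforce
        obtain \<alpha>'' where a'': "x' = \<alpha>'' @ \<delta>" "\<forall>g. bpa_step R (\<alpha> @ g) a (\<alpha>'' @ g)"
          using step_app_lift[of R \<alpha> \<delta> a x'] st xy'(1) an by blast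
        have stg: "bpa_step R (\<alpha> @ \<gamma>) a (\<alpha>'' @ \<gamma>)" using a''(2) by blast
        show ?thesis
        proof (rule disjE[OF BB_transfer'[OF xy'(3) stg]])
          assume "a = tau \<and> bbsim R tau (\<alpha>'' @ \<gamma>) (\<beta> @ \<gamma>)"
          then show ?thesis unfolding B_def using a''(1) xy'(2) by blast
        next
          assume "\<exists>t'' t'. tau_path R tau (bbsim R tau (\<alpha> @ \<gamma>)) (\<beta> @ \<gamma>) t'' \<and>
                bpa_step R t'' a t' \<and> bbsim R tau (\<alpha>'' @ \<gamma>) t'"
          then obtain t'' t' where p: "tau_path R tau (bbsim R tau (\<alpha> @ \<gamma>)) (\<beta> @ \<gamma>) t''"
              "bpa_step R t'' a t'" "bbsim R tau (\<alpha>'' @ \<gamma>) t'" by blast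
          have bn: "\<beta> \<noteq> []" using nsim xy'(3) by fastforce
          have cond: "\<forall>\<zeta>. bbsim R tau (\<alpha> @ \<gamma>) (\<zeta> @ \<gamma>) \<longrightarrow> \<zeta> \<noteq> [] \<and> (x, \<zeta> @ \<delta>) \<in> B"
          proof (intro allI impI conjI)
            fix \<zeta> assume "bbsim R tau (\<alpha> @ \<gamma>) (\<zeta> @ \<gamma>)"
            then show "\<zeta> \<noteq> []" using nsim by fastforce
            show "(x, \<zeta> @ \<delta>) \<in> B" unfolding B_def using xy'(1) \<open>bbsim R tau (\<alpha> @ \<gamma>) (\<zeta> @ \<gamma>)\<close> by blast
          qed
          obtain \<zeta>'' where z: "t'' = \<zeta>'' @ \<gamma>" "\<zeta>'' \<noteq> []" "tau_path R tau (\<lambda>u. (x, u) \<in> B) (\<beta> @ \<delta>) (\<zeta>'' @ \<delta>)"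
            using lift_path[OF p(1) refl bn, of "\<lambda>u. (x, u) \<in> B" \<delta>] cond by blast
          obtain \<zeta>' where z': "t' = \<zeta>' @ \<gamma>" "\<forall>g. bpa_step R (\<zeta>'' @ g) a (\<zeta>' @ g)"
            using step_app_lift[of R \<zeta>'' \<gamma> a t'] p(2) z(1,2) by blast
          have "(x', \<zeta>' @ \<delta>) \<in> B" unfolding B_def using a''(1) p(3) z'(1) by blast
          then show ?thesis using z(3) z'(2) xy'(2) by blast
        qed
      qed
    qed
  qed
  moreover have "(\<alpha> @ \<delta>, \<beta> @ \<delta>) \<in> B" unfolding B_def using h by blast
  ultimately show ?thesis by (rule sym_transfer_bisim)
qed


lemma P1_iff:
  assumes "normed R" "Rset R tau \<gamma> = Rset R tau \<delta>"
  shows "bbsim R tau (\<alpha> @ \<gamma>) (\<beta> @ \<gamma>) \<longleftrightarrow> bbsim R tau (\<alpha> @ \<delta>) (\<beta> @ \<delta>)"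
  using P1[OF assms] P1[OF assms(1) assms(2)[symmetric]] by blast

section \<open>Candidates\<close>

lemma rf_Cons:
  assumes "redundancy_free R tau (X # \<alpha>) \<gamma>"
  shows "redundancy_free R tau \<alpha> \<gamma>" "\<not> bbsim R tau (X # \<alpha> @ \<gamma>) (\<alpha> @ \<gamma>)"
proof -
  show "redundancy_free R tau \<alpha> \<gamma>"
    unfolding redundancy_free_def
  proof
    assume "\<exists>\<delta> Y \<beta>. \<alpha> = \<delta> @ Y # \<beta> \<and> bbsim R tau (Y # \<beta> @ \<gamma>) (\<beta> @ \<gamma>)"
    then obtain \<delta> Y \<beta> where "\<alpha> = \<delta> @ Y # \<beta>" "bbsim R tau (Y # \<beta> @ \<gamma>) (\<beta> @ \<gamma>)" by blast
    then have "X # \<alpha> = (X # \<delta>) @ Y # \<beta>" by simp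
    then show False using assms \<open>bbsim R tau (Y # \<beta> @ \<gamma>) (\<beta> @ \<gamma>)\<close>
      unfolding redundancy_free_def by blast
  qed
  show "\<not> bbsim R tau (X # \<alpha> @ \<gamma>) (\<alpha> @ \<gamma>)"
  proof
    assume "bbsim R tau (X # \<alpha> @ \<gamma>) (\<alpha> @ \<gamma>)"
    moreover have "X # \<alpha> = [] @ X # \<alpha>" by simp
    ultimately show False using assms unfolding redundancy_free_def by blast
  qed
qed

lemma rf_len:
  assumes nr: "normed R"
  shows "redundancy_free R tau \<alpha> \<gamma> \<Longrightarrow> ipath R tau (\<alpha> @ \<gamma>) k \<Longrightarrow> bn R tau \<gamma> + length \<alpha> \<le> k"
proof (induction \<alpha> arbitrary: k)
  case Nil
  then show ?case using through[of R tau "[] @ \<gamma>" k "[]" \<gamma>] by simp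
next
  case (Cons X \<alpha>1)
  note rf = rf_Cons[OF Cons.prems(1)]
  have "Suc (bn R tau (\<alpha>1 @ \<gamma>)) \<le> k"
    using through[OF Cons.prems(2), of "[X]" "\<alpha>1 @ \<gamma>"] rf(2) by simp
  moreover have "bn R tau \<gamma> + length \<alpha>1 \<le> bn R tau (\<alpha>1 @ \<gamma>)"
    using Cons.IH[OF rf(1) ipath_bn[OF nr]] .
  ultimately show ?case by simp
qed

lemma cand_len:
  assumes nr: "normed R" and "\<alpha> \<in> cand R tau A \<gamma>"
  shows "length \<alpha> \<le> bn R tau (A # \<gamma>)"
proof -
  have h: "bbsim R tau (\<alpha> @ \<gamma>) (A # \<gamma>)" "redundancy_free R tau \<alpha> \<gamma>"
    using assms(2) unfolding cand_def by blast+
  obtain k' where "k' \<le> bn R tau (A # \<gamma>)" "ipath R tau (\<alpha> @ \<gamma>) k'"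
    using bisim_ipath[OF nr ipath_bn[OF nr] h(1)] by blast
  then show ?thesis using rf_len[OF nr h(2)] by fastforce
qed

lemma cand_finite:
  assumes nr: "normed R"
  shows "finite (cand R tau A (\<gamma> :: 'v::finite list))"
proof -
  have "cand R tau A \<gamma> \<subseteq> {xs. set xs \<subseteq> UNIV \<and> length xs \<le> bn R tau (A # \<gamma>)}"
    using cand_len[OF nr] by blast
  moreover have "finite {xs :: 'v list. set xs \<subseteq> UNIV \<and> length xs \<le> bn R tau (A # \<gamma>)}"
    by (rule finite_lists_length_le) simp
  ultimately show ?thesis by (rule finite_subset)
qed

lemma cand_nonempty: "cand R tau A \<gamma> \<noteq> {}"
proof (cases "bbsim R tau (A # \<gamma>) \<gamma>")
  case True
  then have "[] \<in> cand R tau A \<gamma>"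
    unfolding cand_def redundancy_free_def by (auto intro: bbsim_sym)
  then show ?thesis by blast
next
  case False
  have "[A] \<in> cand R tau A \<gamma>"
    unfolding cand_def redundancy_free_def
  proof (intro CollectI conjI)
    show "bbsim R tau ([A] @ \<gamma>) (A # \<gamma>)" by (simp add: bbsim_refl)
    show "\<not> (\<exists>\<delta> X \<beta>. [A] = \<delta> @ X # \<beta> \<and> bbsim R tau (X # \<beta> @ \<gamma>) (\<beta> @ \<gamma>))"
    proof
      assume "\<exists>\<delta> X \<beta>. [A] = \<delta> @ X # \<beta> \<and> bbsim R tau (X # \<beta> @ \<gamma>) (\<beta> @ \<gamma>)"
      then obtain \<delta> X \<beta> where "[A] = \<delta> @ X # \<beta>" "bbsim R tau (X # \<beta> @ \<gamma>) (\<beta> @ \<gamma>)" by blast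
      moreover then have "\<delta> = [] \<and> X = A \<and> \<beta> = []" by (cases \<delta>) auto
      ultimately show False using False by simp
    qed
  qed
  then show ?thesis by blast
qed

lemma cand_indep:
  assumes "normed R" "Rset R tau \<gamma> = Rset R tau \<delta>"
  shows "cand R tau A \<gamma> = cand R tau A \<delta>"
proof -
  have a: "bbsim R tau (\<alpha> @ \<gamma>) (A # \<gamma>) \<longleftrightarrow> bbsim R tau (\<alpha> @ \<delta>) (A # \<delta>)" for \<alpha>
    using P1_iff[OF assms, of \<alpha> "[A]"] by simp
  have b: "bbsim R tau (X # \<beta> @ \<gamma>) (\<beta> @ \<gamma>) \<longleftrightarrow> bbsim R tau (X # \<beta> @ \<delta>) (\<beta> @ \<delta>)" for X \<beta>
    using P1_iff[OF assms, of "X # \<beta>" \<beta>] by simp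
  show ?thesis unfolding cand_def redundancy_free_def using a b by auto
qed

section \<open>Transducer\<close>

lemma lex_eq:
  fixes \<alpha> \<beta> :: "'v::linorder list"
  assumes "length \<alpha> = length \<beta>"
  shows "lex_smaller \<alpha> \<beta> \<longleftrightarrow> rev \<alpha> < rev \<beta>"
proof
  assume "lex_smaller \<alpha> \<beta>"
  then have "\<exists>\<alpha>' \<beta>' A B \<gamma>. \<alpha> = \<alpha>' @ A # \<gamma> \<and> \<beta> = \<beta>' @ B # \<gamma> \<and> A < B"
    using assms unfolding lex_smaller_def by auto
  then obtain \<alpha>' \<beta>' A B \<gamma> where h: "\<alpha> = \<alpha>' @ A # \<gamma>" "\<beta> = \<beta>' @ B # \<gamma>" "A < B" by blast
  have "rev \<alpha> = rev \<gamma> @ A # rev \<alpha>'" "rev \<beta> = rev \<gamma> @ B # rev \<beta>'" using h by simp_all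
  then show "rev \<alpha> < rev \<beta>" unfolding list_less_def lexord_def using h(3) by blast
next
  assume "rev \<alpha> < rev \<beta>"
  then have "\<exists>a v. rev \<beta> = rev \<alpha> @ a # v \<or>
            (\<exists>u a b v w. a < b \<and> rev \<alpha> = u @ (a # v) \<and> rev \<beta> = u @ (b # w))"
    unfolding list_less_def lexord_def by blast
  then obtain u a b v w where h: "a < b" "rev \<alpha> = u @ (a # v)" "rev \<beta> = u @ (b # w)"
    using assms by (metis add_Suc_right add_cancel_left_right length_Cons length_append length_rev nat.distinct(1))
  have "\<alpha> = rev v @ a # rev u" "\<beta> = rev w @ b # rev u"
    using h(2,3) by (metis rev_append rev_rev_ident rev.simps(2) append.assoc append_Cons append_Nil)+
  then show "lex_smaller \<alpha> \<beta>" unfolding lex_smaller_def using h(1) by blast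
qed

lemma unique_output:
  fixes S :: "'v::linorder list set"
  assumes "finite S" "S \<noteq> {}"
  shows "\<exists>!\<alpha>. \<alpha> \<in> S \<and> (\<forall>\<beta>\<in>S. length \<beta> \<le> length \<alpha>) \<and>
           (\<forall>\<beta>\<in>S. length \<beta> = length \<alpha> \<longrightarrow> \<beta> \<noteq> \<alpha> \<longrightarrow> lex_smaller \<alpha> \<beta>)"
proof -
  define L where "L = Max (length ` S)"
  define S' where "S' = {\<beta>\<in>S. length \<beta> = L}"
  have LS: "L \<in> length ` S" unfolding L_def using assms by simp
  have Lmax: "\<forall>\<beta>\<in>S. length \<beta> \<le> L" unfolding L_def using assms by simp
  have fS': "finite (rev ` S')" unfolding S'_def using assms(1) by simp
  have nS': "rev ` S' \<noteq> {}" unfolding S'_def using LS by auto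
  define m where "m = Min (rev ` S')"
  have mS: "m \<in> rev ` S'" unfolding m_def using fS' nS' by simp
  define \<alpha> where "\<alpha> = rev m"
  have aS': "\<alpha> \<in> S'" using mS unfolding \<alpha>_def by auto
  have ex: "\<alpha> \<in> S \<and> (\<forall>\<beta>\<in>S. length \<beta> \<le> length \<alpha>) \<and>
           (\<forall>\<beta>\<in>S. length \<beta> = length \<alpha> \<longrightarrow> \<beta> \<noteq> \<alpha> \<longrightarrow> lex_smaller \<alpha> \<beta>)"
  proof (intro conjI ballI impI)
    show "\<alpha> \<in> S" using aS' unfolding S'_def by simp
    fix \<beta> assume "\<beta> \<in> S"
    then show "length \<beta> \<le> length \<alpha>" using Lmax aS' unfolding S'_def by simp
  next
    fix \<beta> assume b: "\<beta> \<in> S" "length \<beta> = length \<alpha>" "\<beta> \<noteq> \<alpha>"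
    then have "\<beta> \<in> S'" using aS' unfolding S'_def by simp
    then have "m \<le> rev \<beta>" unfolding m_def using fS' by simp
    moreover have "m \<noteq> rev \<beta>" using b(3) unfolding \<alpha>_def by auto
    ultimately have "rev \<alpha> < rev \<beta>" unfolding \<alpha>_def by simp
    then show "lex_smaller \<alpha> \<beta>" using lex_eq b(2) by metis
  qed
  show ?thesis
  proof (rule ex1I[of _ \<alpha>])
    show "\<alpha> \<in> S \<and> (\<forall>\<beta>\<in>S. length \<beta> \<le> length \<alpha>) \<and>
           (\<forall>\<beta>\<in>S. length \<beta> = length \<alpha> \<longrightarrow> \<beta> \<noteq> \<alpha> \<longrightarrow> lex_smaller \<alpha> \<beta>)" using ex .
  next
    fix \<gamma> assume g: "\<gamma> \<in> S \<and> (\<forall>\<beta>\<in>S. length \<beta> \<le> length \<gamma>) \<and>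
           (\<forall>\<beta>\<in>S. length \<beta> = length \<gamma> \<longrightarrow> \<beta> \<noteq> \<gamma> \<longrightarrow> lex_smaller \<gamma> \<beta>)"
    have len: "length \<gamma> = length \<alpha>" using g ex by (meson le_antisym)
    show "\<gamma> = \<alpha>"
    proof (rule ccontr)
      assume ne: "\<gamma> \<noteq> \<alpha>"
      have aS: "\<alpha> \<in> S" and gS: "\<gamma> \<in> S" using g ex by blast+
      have ne': "\<alpha> \<noteq> \<gamma>" using ne by simp
      have "lex_smaller \<gamma> \<alpha>" using g aS len[symmetric] ne' by blast
      moreover have "lex_smaller \<alpha> \<gamma>" using ex gS len ne by blast
      ultimately have "rev \<gamma> < rev \<alpha>" "rev \<alpha> < rev \<gamma>" using lex_eq len by metis+
      then show False by simp
    qed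
  qed
qed

theorem mainTheorem10:
  fixes R :: "('v::{finite,linorder} \<times> 'a \<times> 'v list) set" and tau :: 'a
  assumes "finite R"
    and "normed R"
  shows "(\<forall>\<gamma> \<delta>. Rset R tau \<gamma> = Rset R tau \<delta> \<longrightarrow>
            (\<forall>A. Rset R tau (A # \<gamma>) = Rset R tau (A # \<delta>)) \<and>
            (\<forall>\<alpha> \<beta>. bbsim R tau (\<alpha> @ \<gamma>) (\<beta> @ \<gamma>) \<longleftrightarrow> bbsim R tau (\<alpha> @ \<delta>) (\<beta> @ \<delta>)))
       \<and> (\<forall>A \<gamma>. finite (cand R tau A \<gamma>) \<and> cand R tau A \<gamma> \<noteq> {} \<and>
            (\<forall>\<delta>. Rset R tau \<gamma> = Rset R tau \<delta> \<longrightarrow> cand R tau A \<gamma> = cand R tau A \<delta>))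
       \<and> (\<forall>A \<gamma>. \<exists>!\<alpha>. transducer_output R tau A \<gamma> \<alpha>)"
proof (intro conjI allI impI)
  fix \<gamma> \<delta> :: "'v list" assume eq: "Rset R tau \<gamma> = Rset R tau \<delta>"
  show "bbsim R tau (\<alpha> @ \<gamma>) (\<beta> @ \<gamma>) \<longleftrightarrow> bbsim R tau (\<alpha> @ \<delta>) (\<beta> @ \<delta>)" for \<alpha> \<beta>
    by (rule P1_iff[OF assms(2) eq])
  show "Rset R tau (A # \<gamma>) = Rset R tau (A # \<delta>)" for A
    unfolding Rset_def using P1_iff[OF assms(2) eq, of "[_, A]" "[A]"] by auto
next
  fix A and \<gamma> :: "'v list"
  show "finite (cand R tau A \<gamma>)" by (rule cand_finite[OF assms(2)])
  show "cand R tau A \<gamma> \<noteq> {}" by (rule cand_nonempty)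
  show "cand R tau A \<gamma> = cand R tau A \<delta>" if "Rset R tau \<gamma> = Rset R tau \<delta>" for \<delta>
    by (rule cand_indep[OF assms(2) that])
next
  fix A and \<gamma> :: "'v list"
  show "\<exists>!\<alpha>. transducer_output R tau A \<gamma> \<alpha>"
    unfolding transducer_output_def
    by (rule unique_output[OF cand_finite[OF assms(2)] cand_nonempty])
qed

end
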